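(* Let $h>0$ satisfy $L_eh^2\le1/9$, where $L_e=L+2\epsilon\tilde L$. Then for all $x,v\in\mathbb{R}^{Nd}$, $$\sum_{\ell=1}^N\sup_{0\le s\le h}|q^\ell_s(x,v)-x^\ell-sv^\ell|^2\le\frac{16}5(L_eh^2)^2\sum_{\ell=1}^N\Big(|x^\ell|^2+h^2|v^\ell|^2+\frac13L_e^{-2}\epsilon^2\mathbf W_0^2\Big),$$ where $\mathbf W_0=|\nabla_1W(0,0)|$.
   Context: Standing assumptions: $\epsilon\ge0$; $V:\mathbb{R}^d\to\mathbb{R}$, $W:\mathbb{R}^d\times\mathbb{R}^d\to\mathbb{R}$ are $C^1$, $\nabla_1W$ the gradient in the first argument, constants $L>0$, $\tilde L\ge0$ with: (a) $V(0)=0$, $V\ge0$; (b) $|\nabla V(x)-\nabla V(y)|\le L|x-y|$; (d) $W$ symmetric, $|\nabla_1W(x,y)-\nabla_1W(\tilde x,\tilde y)|\le\tilde L(|x-\tilde x|+|y-\tilde y|)$. Points of $\mathbb{R}^{Nd}$: $x=(x^1,\dots,x^N)$, $x^i\in\mathbb{R}^d$. $U(x)=\sum_i\big(V(x^i)+\frac\epsilon{2N}\sum_jW(x^i,x^j)\big)$, $\nabla_iU=\partial U/\partial x^i$. Exact flow $(q_t,p_t)(x,v)$: $\dot q^i_t=p^i_t$, $\dot p^i_t=-\nabla_iU(q_t)$, $(q_0,p_0)=(x,v)$. *)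

theory Defs
  imports "HOL-Analysis.Analysis"
begin

text \<open>Configurations in R^{Nd} are represented as functions nat => 'a, where
  'a is R^d (any Euclidean space) and only the components 0..N-1 matter.\<close>

definition potU :: "nat \<Rightarrow> real \<Rightarrow> ('a \<Rightarrow> real) \<Rightarrow> ('a \<Rightarrow> 'a \<Rightarrow> real)
                    \<Rightarrow> (nat \<Rightarrow> 'a) \<Rightarrow> real" where
  "potU N \<epsilon> V W x = (\<Sum>i<N. V (x i) + \<epsilon> / (2 * real N) * (\<Sum>j<N. W (x i) (x j)))"

end

theory Submission
  imports Defs
begin

lemma coord_deriv:
  "((\<lambda>u. (y(i:=u)) k) has_derivative (\<lambda>h. if k = i then h else 0)) (at u0)"
  by (cases "k = i") (auto intro!: derivative_eq_intros)

lemma potU_deriv: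
  fixes V :: "'a::euclidean_space \<Rightarrow> real"
  assumes V_deriv: "\<And>y. (V has_derivative (\<lambda>k. gradV y \<bullet> k)) (at y)"
    and W_C1: "\<And>y z. (case_prod W has_derivative (\<lambda>(k1, k2). grad1W y z \<bullet> k1 + grad1W z y \<bullet> k2)) (at (y, z))"
    and i: "i < N"
  shows "((\<lambda>u. potU N \<epsilon> V W (y(i := u))) has_derivative
     (\<lambda>h. (gradV (y i) + (\<epsilon> / real N) *\<^sub>R (\<Sum>j<N. grad1W (y i) (y j))) \<bullet> h)) (at (y i))"
proof -
  define c where "c = \<epsilon> / (2 * real N)"
  define d where "d = (\<lambda>k (h::'a). if k = i then h else 0)"
  have dV: "((\<lambda>u. V ((y(i:=u)) k)) has_derivative (\<lambda>h. gradV (y k) \<bullet> d k h)) (at (y i))" for k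
  proof -
    have c: "((\<lambda>u. (y(i:=u)) k) has_derivative d k) (at (y i))"
      unfolding d_def by (rule coord_deriv)
    have "((V \<circ> (\<lambda>u. (y(i:=u)) k)) has_derivative ((\<lambda>h. gradV ((y(i:=y i)) k) \<bullet> h) \<circ> d k)) (at (y i))"
      by (rule diff_chain_at[OF c V_deriv])
    then show ?thesis by (simp add: o_def d_def)
  qed
  have dW: "((\<lambda>u. W ((y(i:=u)) k) ((y(i:=u)) j)) has_derivative
      (\<lambda>h. grad1W (y k) (y j) \<bullet> d k h + grad1W (y j) (y k) \<bullet> d j h)) (at (y i))" for k j
  proof -
    have P: "((\<lambda>u. ((y(i:=u)) k, (y(i:=u)) j)) has_derivative (\<lambda>h. (d k h, d j h))) (at (y i))"
      using has_derivative_Pair[OF coord_deriv coord_deriv] unfolding d_def .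
    have "((case_prod W \<circ> (\<lambda>u. ((y(i:=u)) k, (y(i:=u)) j))) has_derivative
        ((\<lambda>(k1, k2). grad1W ((y(i:=y i)) k) ((y(i:=y i)) j) \<bullet> k1 + grad1W ((y(i:=y i)) j) ((y(i:=y i)) k) \<bullet> k2) \<circ> (\<lambda>h. (d k h, d j h)))) (at (y i))"
      by (rule diff_chain_at[OF P]) (rule W_C1)
    then show ?thesis by (simp add: o_def)
  qed
  have D: "((\<lambda>u. potU N \<epsilon> V W (y(i := u))) has_derivative
     (\<lambda>h. \<Sum>k<N. gradV (y k) \<bullet> d k h + c * (\<Sum>j<N. grad1W (y k) (y j) \<bullet> d k h + grad1W (y j) (y k) \<bullet> d j h))) (at (y i))"
    unfolding potU_def c_def[symmetric]
    by (intro has_derivative_sum has_derivative_add has_derivative_mult_right dV dW)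
  have E: "(\<Sum>k<N. gradV (y k) \<bullet> d k h + c * (\<Sum>j<N. grad1W (y k) (y j) \<bullet> d k h + grad1W (y j) (y k) \<bullet> d j h))
     = (gradV (y i) + (\<epsilon> / real N) *\<^sub>R (\<Sum>j<N. grad1W (y i) (y j))) \<bullet> h" for h
  proof -
    have s1: "(\<Sum>k<N. gradV (y k) \<bullet> d k h) = gradV (y i) \<bullet> h"
      using i by (simp add: d_def if_distrib cong: if_cong)
    have s2: "(\<Sum>k<N. \<Sum>j<N. grad1W (y k) (y j) \<bullet> d k h) = (\<Sum>j<N. grad1W (y i) (y j) \<bullet> h)"
    proof -
      have "(\<Sum>j<N. grad1W (y k) (y j) \<bullet> d k h) = (if k = i then (\<Sum>j<N. grad1W (y i) (y j) \<bullet> h) else 0)" for k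
        by (simp add: d_def)
      then show ?thesis using i by simp
    qed
    have s3: "(\<Sum>k<N. \<Sum>j<N. grad1W (y j) (y k) \<bullet> d j h) = (\<Sum>j<N. grad1W (y i) (y j) \<bullet> h)"
      using i by (simp add: d_def if_distrib cong: if_cong)
    have "(\<Sum>k<N. gradV (y k) \<bullet> d k h + c * (\<Sum>j<N. grad1W (y k) (y j) \<bullet> d k h + grad1W (y j) (y k) \<bullet> d j h))
       = (\<Sum>k<N. gradV (y k) \<bullet> d k h) + c * ((\<Sum>k<N. \<Sum>j<N. grad1W (y k) (y j) \<bullet> d k h) + (\<Sum>k<N. \<Sum>j<N. grad1W (y j) (y k) \<bullet> d j h))"
      by (simp add: sum.distrib sum_distrib_left[symmetric])
    also have "\<dots> = gradV (y i) \<bullet> h + 2 * c * (\<Sum>j<N. grad1W (y i) (y j) \<bullet> h)"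
      by (simp add: s1 s2 s3)
    also have "\<dots> = (gradV (y i) + (\<epsilon> / real N) *\<^sub>R (\<Sum>j<N. grad1W (y i) (y j))) \<bullet> h"
      using i by (simp add: c_def inner_add_left inner_sum_left)
    finally show ?thesis .
  qed
  show ?thesis using D unfolding E .
qed


lemma inner_vderiv:
  fixes F :: "real \<Rightarrow> 'a::real_inner"
  assumes "(F has_vector_derivative F') (at t)"
  shows "((\<lambda>s. w \<bullet> F s) has_real_derivative (w \<bullet> F')) (at t)"
  using assms unfolding has_vector_derivative_def has_field_derivative_def
  by (auto intro!: derivative_eq_intros simp: inner_scaleR_right mult.commute)

lemma real_cmp:
  fixes g f g' f' :: "real \<Rightarrow> real"
  assumes s: "0 \<le> s"
    and g: "\<And>t. 0 \<le> t \<Longrightarrow> t \<le> s \<Longrightarrow> (g has_real_derivative g' t) (at t)"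
    and f: "\<And>t. 0 \<le> t \<Longrightarrow> t \<le> s \<Longrightarrow> (f has_real_derivative f' t) (at t)"
    and le: "\<And>t. 0 \<le> t \<Longrightarrow> t \<le> s \<Longrightarrow> g' t \<le> f' t"
    and z: "g 0 \<le> f 0"
  shows "g s \<le> f s"
proof -
  have "(\<lambda>t. g t - f t) 0 \<ge> (\<lambda>t. g t - f t) s"
    by (rule DERIV_nonpos_imp_nonincreasing[OF s])
      (use g f le in \<open>auto intro!: exI derivative_eq_intros\<close>)
  with z show ?thesis by simp
qed

lemma gradV0:
  fixes V :: "'a::euclidean_space \<Rightarrow> real"
  assumes V_deriv: "\<And>y. (V has_derivative (\<lambda>k. gradV y \<bullet> k)) (at y)"
    and V0: "V 0 = 0" and Vnn: "\<And>y. V y \<ge> 0"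
  shows "gradV 0 = 0"
proof -
  have "(\<lambda>k. gradV 0 \<bullet> k) = (\<lambda>h. 0)"
    by (rule has_derivative_local_min[OF V_deriv]) (simp add: V0 Vnn)
  then have "gradV 0 \<bullet> gradV 0 = 0" by metis
  then show ?thesis by simp
qed


lemma gradU_bound:
  fixes V :: "'a::euclidean_space \<Rightarrow> real"
  assumes eps: "\<epsilon> \<ge> 0"
    and V_deriv: "\<And>y. (V has_derivative (\<lambda>k. gradV y \<bullet> k)) (at y)"
    and V0: "V 0 = 0" and Vnn: "\<And>y. V y \<ge> 0"
    and gradV_Lip: "\<And>y z. norm (gradV y - gradV z) \<le> L * norm (y - z)"
    and W_C1: "\<And>y z. (case_prod W has_derivative (\<lambda>(k1, k2). grad1W y z \<bullet> k1 + grad1W z y \<bullet> k2)) (at (y, z))"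
    and gradW_Lip: "\<And>y z y' z'. norm (grad1W y z - grad1W y' z') \<le> Lt * (norm (y - y') + norm (z - z'))"
    and gradU_def: "\<And>y i. i < N \<Longrightarrow>
          ((\<lambda>u. potU N \<epsilon> V W (y(i := u))) has_derivative (\<lambda>k. gradU y i \<bullet> k)) (at (y i))"
    and i: "i < N"
  shows "norm (gradU y i) \<le> (L + \<epsilon> * Lt) * norm (y i) + \<epsilon> * norm (grad1W 0 0)
            + \<epsilon> * Lt / real N * (\<Sum>j<N. norm (y j))"
proof -
  define G where "G = gradV (y i) + (\<epsilon> / real N) *\<^sub>R (\<Sum>j<N. grad1W (y i) (y j))"
  have "(\<lambda>k. gradU y i \<bullet> k) = (\<lambda>k. G \<bullet> k)"
    using has_derivative_unique[OF gradU_def[OF i] potU_deriv[OF V_deriv W_C1 i]] unfolding G_def .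
  then have "gradU y i \<bullet> (gradU y i - G) = G \<bullet> (gradU y i - G)" by metis
  then have "(gradU y i - G) \<bullet> (gradU y i - G) = 0" by (simp add: inner_diff_left)
  then have GU: "gradU y i = G" by simp
  have N: "real N > 0" using i by simp
  have gv: "norm (gradV (y i)) \<le> L * norm (y i)"
    using gradV_Lip[of "y i" 0] gradV0[OF V_deriv V0 Vnn] by simp
  have gw: "norm (grad1W (y i) (y j)) \<le> norm (grad1W 0 0) + Lt * norm (y i) + Lt * norm (y j)" for j
    using gradW_Lip[of "y i" "y j" 0 0] norm_triangle_ineq[of "grad1W (y i) (y j) - grad1W 0 0" "grad1W 0 0"]
    by (simp add: algebra_simps)
  have "norm (\<Sum>j<N. grad1W (y i) (y j)) \<le> (\<Sum>j<N. norm (grad1W 0 0) + Lt * norm (y i) + Lt * norm (y j))"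
    by (rule order_trans[OF norm_sum sum_mono]) (rule gw)
  also have "\<dots> = real N * (norm (grad1W 0 0) + Lt * norm (y i)) + Lt * (\<Sum>j<N. norm (y j))"
    by (simp add: sum.distrib sum_distrib_left algebra_simps)
  finally have sw: "norm (\<Sum>j<N. grad1W (y i) (y j)) \<le> real N * (norm (grad1W 0 0) + Lt * norm (y i)) + Lt * (\<Sum>j<N. norm (y j))" .
  have "norm G \<le> norm (gradV (y i)) + \<epsilon> / real N * norm (\<Sum>j<N. grad1W (y i) (y j))"
    unfolding G_def using norm_triangle_ineq[of "gradV (y i)" "(\<epsilon> / real N) *\<^sub>R (\<Sum>j<N. grad1W (y i) (y j))"] eps
    by (simp add: abs_of_nonneg)
  also have "\<dots> \<le> L * norm (y i) + \<epsilon> / real N * (real N * (norm (grad1W 0 0) + Lt * norm (y i)) + Lt * (\<Sum>j<N. norm (y j)))"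
    by (intro add_mono gv mult_left_mono sw) (use eps N in auto)
  also have "\<dots> = (L + \<epsilon> * Lt) * norm (y i) + \<epsilon> * norm (grad1W 0 0)
            + \<epsilon> * Lt / real N * (\<Sum>j<N. norm (y j))"
    using N by (simp add: field_simps)
  finally show ?thesis unfolding GU .
qed


lemma final_scalar:
  fixes X Y Z T k hh :: real
  assumes X: "X \<ge> 0" and Y: "Y \<ge> 0" and Z: "Z \<ge> 0" and k: "k > 0" "k \<le> 1/9" and hh: "hh \<ge> 0"
    and rec: "X \<le> k / 2 * (X + Y) + hh / 2 * Z" and YT: "Y\<^sup>2 \<le> 2 * T"
  shows "X\<^sup>2 \<le> 16 / 5 * (k\<^sup>2 * T + hh\<^sup>2 * Z\<^sup>2 / 3)"
proof -
  have "(2 - k) * X \<le> k * Y + hh * Z" using rec by (simp add: algebra_simps field_simps)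
  moreover have "17 / 9 * X \<le> (2 - k) * X" using k X by (intro mult_right_mono) auto
  ultimately have "17 / 9 * X \<le> k * Y + hh * Z" by linarith
  then have X1: "X \<le> 9 / 17 * (k * Y + hh * Z)" by (simp add: field_simps)
  have "X\<^sup>2 \<le> (9 / 17 * (k * Y + hh * Z))\<^sup>2" by (rule power_mono[OF X1 X])
  also have "\<dots> = 81 / 289 * (k * Y + hh * Z)\<^sup>2" by (simp add: power2_eq_square algebra_simps)
  also have "\<dots> \<le> 81 / 289 * (2 * (k\<^sup>2 * Y\<^sup>2) + 2 * (hh\<^sup>2 * Z\<^sup>2))"
    using sum_squares_ge_zero[of "k * Y - hh * Z" 0]
    by (intro mult_left_mono) (auto simp: power2_eq_square algebra_simps)
  also have "\<dots> \<le> 81 / 289 * (2 * (k\<^sup>2 * (2 * T)) + 2 * (hh\<^sup>2 * Z\<^sup>2))"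
    using YT by (intro mult_left_mono add_mono mult_right_mono) auto
  also have "\<dots> \<le> 16 / 5 * (k\<^sup>2 * T + hh\<^sup>2 * Z\<^sup>2 / 3)"
  proof -
    have T: "T \<ge> 0" using YT by (smt (verit) zero_le_power2)
    have "0 \<le> k\<^sup>2 * T" "0 \<le> hh\<^sup>2 * Z\<^sup>2" using T by auto
    moreover have e: "k\<^sup>2 * (2 * T) = 2 * (k\<^sup>2 * T)" by simp
    moreover have "\<And>A B :: real. 0 \<le> A \<Longrightarrow> 0 \<le> B \<Longrightarrow> 81 / 289 * (2 * (2 * A) + 2 * B) \<le> 16 / 5 * (A + B / 3)"
      by simp
    ultimately show ?thesis by (simp only: e)
  qed
  finally show ?thesis .
qed

theorem mainTheorem12:
  fixes N :: nat and \<epsilon> L Lt h :: real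
    and V :: "'a::euclidean_space \<Rightarrow> real" and gradV :: "'a \<Rightarrow> 'a"
    and W :: "'a \<Rightarrow> 'a \<Rightarrow> real" and grad1W :: "'a \<Rightarrow> 'a \<Rightarrow> 'a"
    and gradU :: "(nat \<Rightarrow> 'a) \<Rightarrow> nat \<Rightarrow> 'a"
    and x v :: "nat \<Rightarrow> 'a" and q p :: "real \<Rightarrow> nat \<Rightarrow> 'a"
  assumes eps: "\<epsilon> \<ge> 0" and L: "L > 0" and Lt: "Lt \<ge> 0"
    and V_deriv: "\<And>y. (V has_derivative (\<lambda>k. gradV y \<bullet> k)) (at y)"
    and gradV_cont: "continuous_on UNIV gradV"
    and V0: "V 0 = 0" and Vnn: "\<And>y. V y \<ge> 0"
    and gradV_Lip: "\<And>y z. norm (gradV y - gradV z) \<le> L * norm (y - z)"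
    and W_C1: "\<And>y z. (case_prod W has_derivative (\<lambda>(k1, k2). grad1W y z \<bullet> k1 + grad1W z y \<bullet> k2)) (at (y, z))"
    and W_deriv1: "\<And>y z. ((\<lambda>u. W u z) has_derivative (\<lambda>k. grad1W y z \<bullet> k)) (at y)"
    and W_sym: "\<And>y z. W y z = W z y"
    and gradW_Lip: "\<And>y z y' z'. norm (grad1W y z - grad1W y' z') \<le> Lt * (norm (y - y') + norm (z - z'))"
    and gradU_def: "\<And>y i. i < N \<Longrightarrow>
          ((\<lambda>u. potU N \<epsilon> V W (y(i := u))) has_derivative (\<lambda>k. gradU y i \<bullet> k)) (at (y i))"
    and q0: "\<And>i. i < N \<Longrightarrow> q 0 i = x i" and p0: "\<And>i. i < N \<Longrightarrow> p 0 i = v i"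
    and q_ode: "\<And>t i. i < N \<Longrightarrow> ((\<lambda>s. q s i) has_vector_derivative p t i) (at t)"
    and p_ode: "\<And>t i. i < N \<Longrightarrow> ((\<lambda>s. p s i) has_vector_derivative - gradU (q t) i) (at t)"
    and h: "h > 0" and step: "(L + 2 * \<epsilon> * Lt) * h\<^sup>2 \<le> 1 / 9"
  shows "(\<Sum>l<N. (SUP s\<in>{0..h}. (norm (q s l - x l - s *\<^sub>R v l))\<^sup>2))
     \<le> 16 / 5 * ((L + 2 * \<epsilon> * Lt) * h\<^sup>2)\<^sup>2 *
        (\<Sum>l<N. (norm (x l))\<^sup>2 + h\<^sup>2 * (norm (v l))\<^sup>2
            + 1 / 3 * inverse ((L + 2 * \<epsilon> * Lt)\<^sup>2) * \<epsilon>\<^sup>2 * (norm (grad1W 0 0))\<^sup>2)"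
proof -
  define Le where "Le = L + 2 * \<epsilon> * Lt"
  define W0 where "W0 = norm (grad1W 0 0)"
  define e where "e = (\<lambda>s l. q s l - x l - s *\<^sub>R v l)"
  define S where "S = (\<lambda>l. SUP s\<in>{0..h}. (norm (e s l))\<^sup>2)"
  define a where "a = (\<lambda>l. sqrt (S l))"
  define b where "b = (\<lambda>l. norm (x l) + h * norm (v l))"
  define c where "c = (\<lambda>l. b l + a l)"
  define B where "B = (\<lambda>l. (L + \<epsilon> * Lt) * c l + \<epsilon> * Lt / real N * (\<Sum>j<N. c j) + \<epsilon> * W0)"
  have eLt: "\<epsilon> * Lt \<ge> 0" using eps Lt by simp
  have Le_pos: "Le > 0" using L eLt by (simp add: Le_def)
  have q_cont: "continuous_on {0..h} (\<lambda>s. q s l)" if "l < N" for l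
    using q_ode[OF that] has_vector_derivative_continuous
    by (intro continuous_at_imp_continuous_on) blast
  have bdd: "bdd_above ((\<lambda>s. (norm (e s l))\<^sup>2) ` {0..h})" if "l < N" for l
  proof -
    have "continuous_on {0..h} (\<lambda>s. (norm (e s l))\<^sup>2)"
      unfolding e_def by (intro continuous_intros q_cont[OF that])
    then have "compact ((\<lambda>s. (norm (e s l))\<^sup>2) ` {0..h})"
      by (intro compact_continuous_image) auto
    then show ?thesis by (intro bounded_imp_bdd_above compact_imp_bounded)
  qed
  have S_ge: "(norm (e s l))\<^sup>2 \<le> S l" if "l < N" "s \<in> {0..h}" for s l
    unfolding S_def using bdd[OF that(1)] that(2) by (rule cSUP_upper[rotated])
  have e_le_a: "norm (e s l) \<le> a l" if "l < N" "s \<in> {0..h}" for s l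
    unfolding a_def using S_ge[OF that] by (intro real_le_rsqrt)
  have S_nn: "S l \<ge> 0" if "l < N" for l
    using S_ge[OF that, of 0] h by (smt (verit) atLeastAtMost_iff zero_le_power2)
  have a_nn: "a l \<ge> 0" if "l < N" for l using S_nn[OF that] by (simp add: a_def)
  have b_nn: "b l \<ge> 0" for l using h by (simp add: b_def)
  have c_nn: "c l \<ge> 0" if "l < N" for l using a_nn[OF that] b_nn[of l] by (simp add: c_def)
  have q_le: "norm (q r j) \<le> c j" if "j < N" "r \<in> {0..h}" for r j
  proof -
    have "q r j = e r j + x j + r *\<^sub>R v j" by (simp add: e_def)
    then have "norm (q r j) \<le> norm (e r j) + norm (x j) + r * norm (v j)"
      using that(2) norm_triangle_ineq[of "e r j + x j" "r *\<^sub>R v j"] norm_triangle_ineq[of "e r j" "x j"]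
      by simp
    also have "\<dots> \<le> a j + norm (x j) + h * norm (v j)"
      using e_le_a[OF that] that(2) by (intro add_mono mult_right_mono) auto
    finally show ?thesis by (simp add: c_def b_def)
  qed
  have gU: "norm (gradU (q r) l) \<le> B l" if "l < N" "r \<in> {0..h}" for r l
  proof -
    have "norm (gradU (q r) l) \<le> (L + \<epsilon> * Lt) * norm (q r l) + \<epsilon> * W0
            + \<epsilon> * Lt / real N * (\<Sum>j<N. norm (q r j))"
      unfolding W0_def
      by (rule gradU_bound[OF eps V_deriv V0 Vnn gradV_Lip W_C1 gradW_Lip gradU_def that(1)])
    also have "\<dots> \<le> (L + \<epsilon> * Lt) * c l + \<epsilon> * W0 + \<epsilon> * Lt / real N * (\<Sum>j<N. c j)"
      using L eLt that
      by (intro add_mono mult_left_mono q_le sum_mono order_refl) auto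
    finally show ?thesis by (simp add: B_def)
  qed
  have B_nn: "B l \<ge> 0" if "l < N" for l
    using gU[OF that, of 0] h by (smt (verit) atLeastAtMost_iff norm_ge_zero)
  have p_bd: "norm (p s l - v l) \<le> B l * s" if l: "l < N" and s: "s \<in> {0..h}" for s l
  proof -
    define w where "w = p s l - v l"
    have "(\<lambda>t. w \<bullet> (p t l - v l)) s \<le> (\<lambda>t. norm w * B l * t) s"
    proof (rule real_cmp[where g = "\<lambda>t. w \<bullet> (p t l - v l)" and f = "\<lambda>t. norm w * B l * t" and g' = "\<lambda>t. w \<bullet> (- gradU (q t) l)" and f' = "\<lambda>t. norm w * B l"])
      show "0 \<le> s" using s by simp
      fix t assume t: "0 \<le> t" "t \<le> s"
      show "((\<lambda>t. w \<bullet> (p t l - v l)) has_real_derivative w \<bullet> (- gradU (q t) l)) (at t)"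
        using inner_vderiv[OF has_vector_derivative_diff[OF p_ode[OF l] has_vector_derivative_const], of w]
        by simp
      show "((\<lambda>t. norm w * B l * t) has_real_derivative norm w * B l) (at t)"
        by (auto intro!: derivative_eq_intros)
      have "w \<bullet> (- gradU (q t) l) \<le> norm w * norm (gradU (q t) l)"
        using norm_cauchy_schwarz[of w "- gradU (q t) l"] by simp
      also have "\<dots> \<le> norm w * B l"
        using gU[OF l, of t] t s by (intro mult_left_mono) auto
      finally show "w \<bullet> (- gradU (q t) l) \<le> norm w * B l" .
    next
      show "w \<bullet> (p 0 l - v l) \<le> norm w * B l * 0" using p0[OF l] by simp
    qed
    then have "norm w * norm w \<le> norm w * (B l * s)"
      by (simp add: power2_norm_eq_inner[symmetric] power2_eq_square mult.assoc w_def[symmetric])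
    then have "norm w \<le> B l * s"
      using B_nn[OF l] s by (cases "norm w = 0") (auto simp: mult_le_cancel_left)
    then show ?thesis by (simp add: w_def)
  qed
  have e_bd: "norm (e s l) \<le> B l * h\<^sup>2 / 2" if l: "l < N" and s: "s \<in> {0..h}" for s l
  proof -
    define w where "w = e s l"
    have "(\<lambda>t. w \<bullet> e t l) s \<le> (\<lambda>t. norm w * B l * t\<^sup>2 / 2) s"
    proof (rule real_cmp[where g = "\<lambda>t. w \<bullet> e t l" and f = "\<lambda>t. norm w * B l * t\<^sup>2 / 2" and g' = "\<lambda>t. w \<bullet> (p t l - v l)" and f' = "\<lambda>t. norm w * B l * t"])
      show "0 \<le> s" using s by simp
      fix t assume t: "0 \<le> t" "t \<le> s"
      have sv: "((\<lambda>t. t *\<^sub>R v l) has_vector_derivative (t *\<^sub>R 0 + 1 *\<^sub>R v l)) (at t)"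
        by (intro has_vector_derivative_scaleR has_vector_derivative_const DERIV_ident)
      have "((\<lambda>t. q t l - x l - t *\<^sub>R v l) has_vector_derivative (p t l - 0 - (t *\<^sub>R 0 + 1 *\<^sub>R v l))) (at t)"
        by (intro has_vector_derivative_diff q_ode[OF l] has_vector_derivative_const sv)
      then show "((\<lambda>t. w \<bullet> e t l) has_real_derivative w \<bullet> (p t l - v l)) (at t)"
        using inner_vderiv[of "\<lambda>t. q t l - x l - t *\<^sub>R v l" _ t w] by (simp add: e_def)
      show "((\<lambda>t. norm w * B l * t\<^sup>2 / 2) has_real_derivative norm w * B l * t) (at t)"
        by (auto intro!: derivative_eq_intros)
      have "w \<bullet> (p t l - v l) \<le> norm w * norm (p t l - v l)"
        using norm_cauchy_schwarz[of w] by simp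
      also have "\<dots> \<le> norm w * (B l * t)"
        using p_bd[OF l, of t] t s by (intro mult_left_mono) auto
      finally show "w \<bullet> (p t l - v l) \<le> norm w * B l * t" by (simp add: mult.assoc)
    next
      show "w \<bullet> e 0 l \<le> norm w * B l * 0\<^sup>2 / 2" using q0[OF l] by (simp add: e_def)
    qed
    then have "norm w * norm w \<le> norm w * (B l * s\<^sup>2 / 2)"
      by (simp add: power2_norm_eq_inner[symmetric] power2_eq_square mult.assoc w_def[symmetric])
    then have "norm w \<le> B l * s\<^sup>2 / 2"
      using B_nn[OF l] s by (cases "norm w = 0") (auto simp: mult_le_cancel_left)
    also have "\<dots> \<le> B l * h\<^sup>2 / 2"
      using B_nn[OF l] s by (auto intro!: divide_right_mono mult_left_mono power_mono)
    finally show ?thesis by (simp add: w_def)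
  qed
  have a_bd: "a l \<le> h\<^sup>2 / 2 * B l" if l: "l < N" for l
  proof -
    have "S l \<le> (B l * h\<^sup>2 / 2)\<^sup>2"
      unfolding S_def
      by (rule cSUP_least) (use h e_bd[OF l] in \<open>auto intro!: power_mono\<close>)
    then have "a l \<le> sqrt ((B l * h\<^sup>2 / 2)\<^sup>2)" unfolding a_def by (rule real_sqrt_le_mono)
    then show ?thesis using B_nn[OF l] by (simp add: mult.commute)
  qed
  show ?thesis
  proof (cases "N = 0")
    case True
    then show ?thesis by simp
  next
    case False
    then have Npos: "real N > 0" by simp
    define nrm where "nrm = (\<lambda>f. L2_set f {..<N})"
    define k where "k = Le * h\<^sup>2"
    define Z where "Z = sqrt (real N) * (\<epsilon> * W0)"
    define T where "T = (\<Sum>l<N. (norm (x l))\<^sup>2 + h\<^sup>2 * (norm (v l))\<^sup>2)"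
    have W0: "W0 \<ge> 0" by (simp add: W0_def)
    have Z: "Z \<ge> 0" using eps W0 by (simp add: Z_def)
    have nrm_const: "nrm (\<lambda>l. K) = sqrt (real N) * \<bar>K\<bar>" for K by (simp add: nrm_def L2_set_constant)
    have sumc: "(\<Sum>j<N. c j) \<le> sqrt (real N) * nrm c"
    proof -
      have "(\<Sum>j<N. \<bar>c j\<bar> * \<bar>1\<bar>) \<le> nrm c * nrm (\<lambda>_. 1)" unfolding nrm_def by (rule L2_set_mult_ineq)
      moreover have "(\<Sum>j<N. \<bar>c j\<bar> * \<bar>1\<bar>) = (\<Sum>j<N. c j)" using c_nn by (intro sum.cong) auto
      ultimately show ?thesis using nrm_const[of 1] by (simp add: mult.commute)
    qed
    have X1: "nrm a \<le> nrm (\<lambda>l. h\<^sup>2 / 2 * B l)"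
      unfolding nrm_def by (rule L2_set_mono) (use a_bd a_nn in auto)
    have X2: "nrm (\<lambda>l. h\<^sup>2 / 2 * B l) = h\<^sup>2 / 2 * nrm B"
      unfolding nrm_def by (rule L2_set_right_distrib[symmetric]) simp
    have X3: "nrm B \<le> (L + \<epsilon> * Lt) * nrm c + nrm (\<lambda>l. \<epsilon> * Lt / real N * (\<Sum>j<N. c j)) + nrm (\<lambda>l. \<epsilon> * W0)"
    proof -
      have "nrm B \<le> nrm (\<lambda>l. (L + \<epsilon> * Lt) * c l + \<epsilon> * Lt / real N * (\<Sum>j<N. c j)) + nrm (\<lambda>l. \<epsilon> * W0)"
        unfolding nrm_def B_def by (rule L2_set_triangle_ineq)
      also have "nrm (\<lambda>l. (L + \<epsilon> * Lt) * c l + \<epsilon> * Lt / real N * (\<Sum>j<N. c j))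
          \<le> nrm (\<lambda>l. (L + \<epsilon> * Lt) * c l) + nrm (\<lambda>l. \<epsilon> * Lt / real N * (\<Sum>j<N. c j))"
        unfolding nrm_def by (rule L2_set_triangle_ineq)
      also have "nrm (\<lambda>l. (L + \<epsilon> * Lt) * c l) = (L + \<epsilon> * Lt) * nrm c"
        unfolding nrm_def using L eLt by (intro L2_set_right_distrib[symmetric]) simp
      finally show ?thesis by simp
    qed
    have K1: "nrm (\<lambda>l. \<epsilon> * Lt / real N * (\<Sum>j<N. c j)) \<le> \<epsilon> * Lt * nrm c"
    proof -
      have sc: "(\<Sum>j<N. c j) \<ge> 0" using c_nn by (intro sum_nonneg) auto
      have "nrm (\<lambda>l. \<epsilon> * Lt / real N * (\<Sum>j<N. c j)) = sqrt (real N) * (\<epsilon> * Lt / real N) * (\<Sum>j<N. c j)"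
        using sc eLt by (simp add: nrm_const abs_of_nonneg)
      also have "\<dots> \<le> sqrt (real N) * (\<epsilon> * Lt / real N) * (sqrt (real N) * nrm c)"
        using eLt Npos by (intro mult_left_mono sumc) auto
      also have "\<dots> = \<epsilon> * Lt * nrm c"
        using Npos by (simp add: field_simps)
      finally show ?thesis .
    qed
    have K2: "nrm (\<lambda>l. \<epsilon> * W0) = Z" using eps W0 by (simp add: nrm_const Z_def)
    have X4: "nrm c \<le> nrm b + nrm a" unfolding nrm_def c_def by (rule L2_set_triangle_ineq)
    have rec: "nrm a \<le> k / 2 * (nrm a + nrm b) + h\<^sup>2 / 2 * Z"
    proof -
      have "nrm B \<le> (L + \<epsilon> * Lt) * nrm c + \<epsilon> * Lt * nrm c + Z" using X3 K1 K2 by linarith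
      also have "\<dots> = Le * nrm c + Z" by (simp add: Le_def algebra_simps)
      also have "\<dots> \<le> Le * (nrm a + nrm b) + Z" using X4 Le_pos by (intro add_mono mult_left_mono) auto
      finally have "nrm B \<le> Le * (nrm a + nrm b) + Z" .
      then have "h\<^sup>2 / 2 * nrm B \<le> h\<^sup>2 / 2 * (Le * (nrm a + nrm b) + Z)"
        by (intro mult_left_mono) auto
      then have "nrm a \<le> h\<^sup>2 / 2 * (Le * (nrm a + nrm b) + Z)" using X1 X2 by linarith
      also have "\<dots> = k / 2 * (nrm a + nrm b) + h\<^sup>2 / 2 * Z" by (simp add: k_def algebra_simps)
      finally show ?thesis .
    qed
    have YT: "(nrm b)\<^sup>2 \<le> 2 * T"
    proof -
      have "(nrm b)\<^sup>2 = (\<Sum>l<N. (b l)\<^sup>2)" by (simp add: nrm_def L2_set_def sum_nonneg)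
      also have "\<dots> \<le> (\<Sum>l<N. 2 * ((norm (x l))\<^sup>2 + h\<^sup>2 * (norm (v l))\<^sup>2))"
      proof (rule sum_mono)
        fix l
        show "(b l)\<^sup>2 \<le> 2 * ((norm (x l))\<^sup>2 + h\<^sup>2 * (norm (v l))\<^sup>2)"
          using sum_squares_ge_zero[of "norm (x l) - h * norm (v l)" 0]
          by (simp add: b_def power2_eq_square algebra_simps)
      qed
      finally show ?thesis by (simp add: T_def sum_distrib_left)
    qed
    have XS: "(nrm a)\<^sup>2 = (\<Sum>l<N. S l)"
    proof -
      have "(\<Sum>l<N. (a l)\<^sup>2) = (\<Sum>l<N. S l)" using S_nn by (intro sum.cong) (auto simp: a_def)
      moreover have "(\<Sum>l<N. (a l)\<^sup>2) \<ge> 0" by (intro sum_nonneg) auto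
      ultimately show ?thesis by (simp add: nrm_def L2_set_def)
    qed
    have kpos: "k > 0" using Le_pos h by (simp add: k_def)
    have kle: "k \<le> 1 / 9" using step by (simp add: k_def Le_def)
    have fin: "(nrm a)\<^sup>2 \<le> 16 / 5 * (k\<^sup>2 * T + (h\<^sup>2)\<^sup>2 * Z\<^sup>2 / 3)"
      by (rule final_scalar[OF _ _ Z kpos kle _ rec YT]) (auto simp: nrm_def)
    have rhs: "(\<Sum>l<N. (norm (x l))\<^sup>2 + h\<^sup>2 * (norm (v l))\<^sup>2
            + 1 / 3 * inverse ((L + 2 * \<epsilon> * Lt)\<^sup>2) * \<epsilon>\<^sup>2 * (norm (grad1W 0 0))\<^sup>2)
        = T + real N * (1 / 3 * inverse (Le\<^sup>2) * \<epsilon>\<^sup>2 * W0\<^sup>2)"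
      by (simp add: T_def sum.distrib Le_def W0_def)
    have "16 / 5 * (k\<^sup>2 * T + (h\<^sup>2)\<^sup>2 * Z\<^sup>2 / 3)
        = 16 / 5 * k\<^sup>2 * (T + real N * (1 / 3 * inverse (Le\<^sup>2) * \<epsilon>\<^sup>2 * W0\<^sup>2))"
      using Le_pos Npos by (simp add: k_def Z_def power_mult_distrib field_simps)
    then show ?thesis
      using fin XS rhs by (simp add: S_def e_def k_def Le_def)
  qed
qed

end
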